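(* Let $d,n\in\mathbb{N}$ be such that $h_c(d,n)$ is finite. For every $\epsilon\in(0,1]$ there exists $\gamma>0$ depending only on $\epsilon$, $d$ and $n$ such that the following holds. Let $B$ be an axis-parallel box in $\mathbb{R}^d$ and $S$ a set of $m$ points in $\mathbb{R}^d$ with $|S|\ge h_c(d,n)$. If at least $\epsilon m$ points of $S$ cannot be covered by any $n$ translated copies of $B$ (i.e., for any $n$ translates of $B$, at least $\epsilon m$ points of $S$ lie outside their union), then at least a $\gamma$ fraction of all $h_c(d,n)$-element subsets of $S$ cannot be covered by any $n$ translated copies of $B$.
   Context: An axis-parallel box in $\mathbb{R}^d$ is a set $[\alpha_1,\beta_1]\times\dots\times[\alpha_d,\beta_d]$. A family is $n$-pierceable if some set of at most $n$ points meets every member. Given families $\mathcal{F}_1,\dots,\mathcal{F}_m$, a colorful $t$-tuple is $(C_1,\dots,C_t)$ with $C_j\in\mathcal{F}_{i_j}$ for pairwise distinct $i_j$. $h_c(d,n)$ denotes the smallest positive integer $h$ such that whenever $\mathcal{F}_1,\dots,\mathcal{F}_h$ are collections of axis-parallel boxes in $\mathbb{R}^d$ with every colorful $h$-tuple $n$-pierceable, some $\mathcal{F}_i$ is $n$-pierceable (e.g. $h_c(1,n)=n+1$, $h_c(d,2)=3d$). *)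

theory Defs
  imports "HOL-Analysis.Analysis"
begin

text \<open>Axis-parallel (closed, nonempty) boxes in R^d, with d = CARD('d).\<close>
definition is_box :: "(real^'d::finite) set \<Rightarrow> bool" where
  "is_box C \<longleftrightarrow> (\<exists>a b. (\<forall>i. a$i \<le> b$i) \<and> C = cbox a b)"

definition pierceable :: "nat \<Rightarrow> ('a set) set \<Rightarrow> bool" where
  "pierceable n F \<longleftrightarrow> (\<exists>P. finite P \<and> card P \<le> n \<and> (\<forall>C\<in>F. P \<inter> C \<noteq> {}))"

definition hc_prop :: "('d::finite) itself \<Rightarrow> nat \<Rightarrow> nat \<Rightarrow> bool" where
  "hc_prop (_::'d itself) n h \<longleftrightarrow>
     (\<forall>F :: nat \<Rightarrow> (real^'d) set set.
        (\<forall>i<h. \<forall>C\<in>F i. is_box C) \<longrightarrow>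
        (\<forall>C :: nat \<Rightarrow> (real^'d) set. (\<forall>i<h. C i \<in> F i) \<longrightarrow> pierceable n (C ` {..<h})) \<longrightarrow>
        (\<exists>i<h. pierceable n (F i)))"

text \<open>h_c(d,n) is finite iff some positive h has the property; then it is the least one.\<close>
definition hc_finite :: "('d::finite) itself \<Rightarrow> nat \<Rightarrow> bool" where
  "hc_finite D n \<longleftrightarrow> (\<exists>h. 0 < h \<and> hc_prop D n h)"

definition hc :: "('d::finite) itself \<Rightarrow> nat \<Rightarrow> nat" where
  "hc D n = (LEAST h. 0 < h \<and> hc_prop D n h)"

definition coverable :: "nat \<Rightarrow> (real^'d) set \<Rightarrow> (real^'d::finite) set \<Rightarrow> bool" where
  "coverable n B T \<longleftrightarrow> (\<exists>V. finite V \<and> card V \<le> n \<and> T \<subseteq> (\<Union>v\<in>V. (\<lambda>x. v + x) ` B))"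

end

theory Submission
  imports Defs
begin

lemma poly_exp_lim:
  fixes q :: real
  assumes "0 < q" "q < 1"
  shows "(\<lambda>k. real k ^ p * q ^ k) \<longlonglongrightarrow> 0"
proof -
  define P where "P = Suc p"
  define r where "r = root P q"
  have P0: "P > 0" by (simp add: P_def)
  have r0: "0 < r" "r < 1" using assms P0 by (auto simp: r_def real_root_lt_1_iff)
  have rP: "r ^ P = q" using assms P0 by (simp add: r_def)
  have "(\<lambda>k. real k * r ^ k) \<longlonglongrightarrow> 0"
    using powser_times_n_limit_0[of r] r0 by simp
  then have L: "(\<lambda>k. (real k * r ^ k) ^ P) \<longlonglongrightarrow> 0"
    using tendsto_power[of _ 0 sequentially P] P0 by fastforce
  have eq: "(real k * r ^ k) ^ P = real k ^ P * q ^ k" for k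
    by (simp add: power_mult_distrib rP[symmetric] power_mult[symmetric] mult.commute)
  have L2: "(\<lambda>k. real k ^ P * q ^ k) \<longlonglongrightarrow> 0" using L by (simp add: eq)
  show ?thesis
  proof (rule Lim_null_comparison[OF _ L2])
    show "\<forall>\<^sub>F k in sequentially. norm (real k ^ p * q ^ k) \<le> real k ^ P * q ^ k"
    proof (rule eventually_sequentiallyI[of 1])
      fix k :: nat assume "1 \<le> k"
      then have "real k ^ p \<le> real k ^ P" unfolding P_def
        by (intro power_increasing) auto
      then show "norm (real k ^ p * q ^ k) \<le> real k ^ P * q ^ k"
        using assms by (simp add: abs_mult mult_right_mono)
    qed
  qed
qed

lemma split_count:
  fixes S :: "'a set" and K I :: "'i set" and W :: "('i \<Rightarrow> 'a) \<Rightarrow> 'i \<Rightarrow> 'a set"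
    and c :: "'i \<Rightarrow> real" and G :: "('i \<Rightarrow> 'a) set"
  assumes fK: "finite K" and IK: "I \<subseteq> K" and fS: "finite S" and GI: "G \<subseteq> I \<rightarrow>\<^sub>E S"
    and Wc: "\<And>g l. g \<in> G \<Longrightarrow> l \<in> K - I \<Longrightarrow> real (card (S \<inter> W g l)) \<le> c l"
  shows "real (card {f \<in> K \<rightarrow>\<^sub>E S. restrict f I \<in> G \<and> (\<forall>l\<in>K-I. f l \<in> W (restrict f I) l)})
         \<le> real (card G) * (\<Prod>l\<in>K-I. c l)"
proof -
  let ?A = "{f \<in> K \<rightarrow>\<^sub>E S. restrict f I \<in> G \<and> (\<forall>l\<in>K-I. f l \<in> W (restrict f I) l)}"
  let ?phi = "\<lambda>f. (restrict f I, restrict f (K - I))"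
  let ?Sg = "Sigma G (\<lambda>g. PiE (K - I) (\<lambda>l. S \<inter> W g l))"
  have fI: "finite I" using fK IK finite_subset by blast
  have fG: "finite G" using GI finite_PiE[OF fI, of "\<lambda>_. S"] fS finite_subset by blast
  have inj: "inj_on ?phi ?A"
  proof (rule inj_onI)
    fix f g assume f: "f \<in> ?A" and g: "g \<in> ?A" and e: "?phi f = ?phi g"
    show "f = g"
    proof
      fix x
      show "f x = g x"
      proof (cases "x \<in> K")
        case True
        then show ?thesis
        proof (cases "x \<in> I")
          case True then show ?thesis using e by (metis Pair_inject restrict_apply')
        next
          case False then show ?thesis using e \<open>x \<in> K\<close>
            by (metis DiffI Pair_inject restrict_apply')
        qed
      next
        case False then show ?thesis using f g by (auto simp: PiE_def extensional_def)
      qed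
    qed
  qed
  have sub: "?phi ` ?A \<subseteq> ?Sg"
    using IK by (auto simp: PiE_def Pi_def extensional_def)
  have fin: "finite ?Sg"
    using fG fS by (intro finite_SigmaI finite_PiE) (auto simp: fK)
  have "card ?A = card (?phi ` ?A)" using card_image[OF inj] by simp
  also have "\<dots> \<le> card ?Sg" using card_mono[OF fin sub] .
  also have "\<dots> = (\<Sum>g\<in>G. \<Prod>l\<in>K-I. card (S \<inter> W g l))"
  proof -
    have "\<forall>g\<in>G. finite (PiE (K - I) (\<lambda>l. S \<inter> W g l))"
      using fK fS by (simp add: finite_PiE)
    then have "card ?Sg = (\<Sum>g\<in>G. card (PiE (K - I) (\<lambda>l. S \<inter> W g l)))"
      using fG by (rule card_SigmaI[rotated])
    also have "\<dots> = (\<Sum>g\<in>G. \<Prod>l\<in>K-I. card (S \<inter> W g l))"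
      using fK by (intro sum.cong refl) (rule card_PiE, simp)
    finally show ?thesis .
  qed
  finally have "card ?A \<le> (\<Sum>g\<in>G. \<Prod>l\<in>K-I. card (S \<inter> W g l))" .
  then have "real (card ?A) \<le> real (\<Sum>g\<in>G. \<Prod>l\<in>K-I. card (S \<inter> W g l))"
    by (simp only: of_nat_le_iff)
  also have "\<dots> = (\<Sum>g\<in>G. \<Prod>l\<in>K-I. real (card (S \<inter> W g l)))"
    by (simp only: of_nat_sum of_nat_prod)
  also have "\<dots> \<le> (\<Sum>g\<in>G. \<Prod>l\<in>K-I. c l)"
    by (intro sum_mono prod_mono) (auto intro: Wc)
  also have "\<dots> = real (card G) * (\<Prod>l\<in>K-I. c l)" by simp
  finally show ?thesis .
qed

definition refl_box :: "(real^'d::finite) set \<Rightarrow> real^'d \<Rightarrow> (real^'d) set" where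
  "refl_box B p = (\<lambda>x. p - x) ` B"

lemma refl_box_is_box:
  assumes "is_box B" shows "is_box (refl_box B p)"
proof -
  obtain a b where ab: "\<forall>i. a$i \<le> b$i" "B = cbox a b" using assms unfolding is_box_def by blast
  have "refl_box B p = cbox (p - b) (p - a)"
  proof (rule set_eqI)
    fix y
    have "y \<in> refl_box B p \<longleftrightarrow> p - y \<in> cbox a b"
      unfolding refl_box_def ab(2)
    proof
      assume "y \<in> (\<lambda>x. p - x) ` cbox a b"
      then obtain x where "x \<in> cbox a b" "y = p - x" by blast
      then show "p - y \<in> cbox a b" by simp
    next
      assume "p - y \<in> cbox a b"
      moreover have "y = p - (p - y)" by simp
      ultimately show "y \<in> (\<lambda>x. p - x) ` cbox a b" by blast
    qed
    also have "\<dots> \<longleftrightarrow> y \<in> cbox (p - b) (p - a)"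
      by (auto simp: mem_box_cart algebra_simps)
    finally show "y \<in> refl_box B p \<longleftrightarrow> y \<in> cbox (p - b) (p - a)" .
  qed
  moreover have "\<forall>i. (p - b)$i \<le> (p - a)$i" using ab(1) by simp
  ultimately show ?thesis unfolding is_box_def by blast
qed

lemma pierce_cover:
  fixes B :: "(real^'d::finite) set"
  shows "pierceable n (refl_box B ` T) \<longleftrightarrow> coverable n B T"
proof
  assume "pierceable n (refl_box B ` T)"
  then obtain P where P: "finite P" "card P \<le> n" "\<forall>C\<in>refl_box B ` T. P \<inter> C \<noteq> {}"
    unfolding pierceable_def by blast
  have "T \<subseteq> (\<Union>v\<in>P. (\<lambda>x. v + x) ` B)"
  proof
    fix p assume "p \<in> T"
    then obtain v where "v \<in> P" "v \<in> refl_box B p" using P(3) by blast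
    then obtain x where "x \<in> B" "v = p - x" unfolding refl_box_def by blast
    then show "p \<in> (\<Union>v\<in>P. (\<lambda>x. v + x) ` B)" using \<open>v \<in> P\<close>
      by (auto simp: image_iff) (metis diff_add_cancel add.commute)
  qed
  then show "coverable n B T" unfolding coverable_def using P by blast
next
  assume "coverable n B T"
  then obtain V where V: "finite V" "card V \<le> n" "T \<subseteq> (\<Union>v\<in>V. (\<lambda>x. v + x) ` B)"
    unfolding coverable_def by blast
  have "\<forall>C\<in>refl_box B ` T. V \<inter> C \<noteq> {}"
  proof
    fix C assume "C \<in> refl_box B ` T"
    then obtain p where p: "p \<in> T" "C = refl_box B p" by blast
    then obtain v x where "v \<in> V" "x \<in> B" "p = v + x" using V(3) by blast
    then have "v \<in> V \<inter> C" using p unfolding refl_box_def by (auto simp: image_iff)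
    then show "V \<inter> C \<noteq> {}" by blast
  qed
  then show "pierceable n (refl_box B ` T)" unfolding pierceable_def using V by blast
qed

lemma coverable_mono: "coverable n B T \<Longrightarrow> T' \<subseteq> T \<Longrightarrow> coverable n B T'"
  unfolding coverable_def by blast

lemma helly_choice:
  fixes B :: "(real^'d::finite) set" and R :: "nat \<Rightarrow> (real^'d) set"
  assumes hp: "hc_prop TYPE('d) n h" and B: "is_box B"
    and R: "\<And>i. i < h \<Longrightarrow> \<not> coverable n B (R i)"
  shows "\<exists>q. (\<forall>i<h. q i \<in> R i) \<and> \<not> coverable n B (q ` {..<h})"
proof -
  define F where "F i = refl_box B ` R i" for i
  have boxes: "\<forall>i<h. \<forall>C\<in>F i. is_box C" using refl_box_is_box[OF B] by (auto simp: F_def)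
  have np: "\<not> (\<exists>i<h. pierceable n (F i))" using R by (auto simp: F_def pierce_cover)
  from hp boxes np obtain C where C: "\<forall>i<h. C i \<in> F i" "\<not> pierceable n (C ` {..<h})"
    unfolding hc_prop_def by blast
  have "\<forall>i. \<exists>p. i < h \<longrightarrow> p \<in> R i \<and> C i = refl_box B p" using C(1) by (auto simp: F_def)
  then obtain q where q: "\<And>i. i < h \<Longrightarrow> q i \<in> R i \<and> C i = refl_box B (q i)" by metis
  have "C ` {..<h} = refl_box B ` (q ` {..<h})" using q by (auto simp: image_iff)
  then have "\<not> coverable n B (q ` {..<h})" using C(2) by (simp add: pierce_cover)
  then show ?thesis using q by blast
qed

definition vof :: "('i \<Rightarrow> real^'d::finite) \<Rightarrow> real^'d \<Rightarrow> ('d \<Rightarrow> 'i) \<Rightarrow> real^'d" where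
  "vof F a s = (\<chi> e. F (s e) $ e - a $ e)"

lemma normalize:
  fixes F :: "'i \<Rightarrow> real^'d::finite" and a b :: "real^'d"
  assumes R: "finite R" "R \<noteq> {}" and fV: "finite V" and cV: "card V \<le> n"
    and cov: "F ` R \<subseteq> (\<Union>v\<in>V. (\<lambda>x. v + x) ` cbox a b)"
  shows "\<exists>\<sigma>. (\<forall>j e. \<sigma> j e \<in> R) \<and> (\<forall>l\<in>R. \<exists>j<n. F l - vof F a (\<sigma> j) \<in> cbox a b)"
proof -
  obtain \<nu> where \<nu>: "bij_betw \<nu> {0..<card V} V" using ex_bij_betw_nat_finite[OF fV] by blast
  have "{0..<card V} \<subseteq> {..<n}" using cV by auto
  then have Vsub: "V \<subseteq> \<nu> ` {..<n}" using \<nu> unfolding bij_betw_def by blast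
  define Rj where "Rj j = {l\<in>R. F l - \<nu> j \<in> cbox a b}" for j
  have ex: "\<exists>l. l \<in> R \<and> (Rj j \<noteq> {} \<longrightarrow> l \<in> Rj j \<and> (\<forall>l'\<in>Rj j. F l $ e \<le> F l' $ e))" for j e
  proof (cases "Rj j = {}")
    case True then show ?thesis using R(2) by blast
  next
    case False
    have fin: "finite (Rj j)" using R(1) by (simp add: Rj_def)
    let ?m = "Min ((\<lambda>l. F l $ e) ` Rj j)"
    have "?m \<in> (\<lambda>l. F l $ e) ` Rj j" using fin False by (intro Min_in) auto
    then obtain l where l: "l \<in> Rj j" "F l $ e = ?m" by (metis (no_types, lifting) imageE)
    have "\<forall>l'\<in>Rj j. F l $ e \<le> F l' $ e" using l fin by (simp add: Min_le)
    then show ?thesis using l(1) by (auto simp: Rj_def)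
  qed
  then obtain \<sigma> where \<sigma>: "\<And>j e. \<sigma> j e \<in> R \<and> (Rj j \<noteq> {} \<longrightarrow> \<sigma> j e \<in> Rj j \<and> (\<forall>l'\<in>Rj j. F (\<sigma> j e) $ e \<le> F l' $ e))"
    by metis
  have "\<forall>l\<in>R. \<exists>j<n. F l - vof F a (\<sigma> j) \<in> cbox a b"
  proof
    fix l assume l: "l \<in> R"
    then obtain v x where vx: "v \<in> V" "x \<in> cbox a b" "F l = v + x" using cov by blast
    then obtain j where j: "j < n" "v = \<nu> j" using Vsub by blast
    have lR: "l \<in> Rj j" using l vx j by (auto simp: Rj_def)
    then have ne: "Rj j \<noteq> {}" by blast
    have "F l - vof F a (\<sigma> j) \<in> cbox a b"
      unfolding mem_box_cart
    proof
      fix e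
      have s1: "F (\<sigma> j e) $ e \<le> F l $ e" using \<sigma>[of j e] ne lR by blast
      have s2: "\<sigma> j e \<in> Rj j" using \<sigma>[of j e] ne by blast
      have s3: "a $ e \<le> F (\<sigma> j e) $ e - \<nu> j $ e" using s2 by (auto simp: Rj_def mem_box_cart)
      have s4: "F l $ e - \<nu> j $ e \<le> b $ e" using lR by (auto simp: Rj_def mem_box_cart)
      show "a $ e \<le> (F l - vof F a (\<sigma> j)) $ e \<and> (F l - vof F a (\<sigma> j)) $ e \<le> b $ e"
        using s1 s3 s4 by (simp add: vof_def)
    qed
    then show "\<exists>j<n. F l - vof F a (\<sigma> j) \<in> cbox a b" using j by blast
  qed
  then show ?thesis using \<sigma> by blast
qed

lemma prod_split_row:
  fixes c :: real
  assumes "finite K" "I \<subseteq> R" "R \<subseteq> K"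
  shows "(\<Prod>l\<in>K-I. if l \<in> R then c else d) = c ^ card (R - I) * d ^ card (K - R)"
proof -
  have eq: "K - I = (R - I) \<union> (K - R)" using assms by blast
  have "(\<Prod>l\<in>K-I. if l \<in> R then c else d)
      = (\<Prod>l\<in>R-I. if l \<in> R then c else d) * (\<Prod>l\<in>K-R. if l \<in> R then c else d)"
    unfolding eq using assms by (intro prod.union_disjoint) (auto intro: finite_subset)
  also have "\<dots> = (\<Prod>l\<in>R-I. c) * (\<Prod>l\<in>K-R. d)"
    by (intro arg_cong2[where f="(*)"] prod.cong) auto
  finally show ?thesis by simp
qed

lemma row_bad:
  fixes S :: "(real^'d::finite) set" and a b :: "real^'d" and \<epsilon> :: real
  assumes fS: "finite S" and eps: "0 < \<epsilon>" "\<epsilon> \<le> 1" and k1: "1 \<le> k" and ih: "i < h"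
    and Hyp: "\<forall>V. finite V \<and> card V \<le> n \<longrightarrow>
               real (card (S - (\<Union>v\<in>V. (\<lambda>x. v + x) ` cbox a b))) \<ge> \<epsilon> * real (card S)"
  shows "real (card {F \<in> ({..<h} \<times> {..<k}) \<rightarrow>\<^sub>E S. coverable n (cbox a b) (F ` ({i} \<times> {..<k}))})
     \<le> (real k ^ CARD('d)) ^ n * ((1 - \<epsilon>) ^ (k - n * CARD('d)) * real (card S) ^ (h * k))"
proof -
  define K where "K = {..<h} \<times> {..<k}"
  define R where "R = {i} \<times> {..<k}"
  define m where "m = card S"
  define D where "D = CARD('d)"
  define Sig where "Sig = PiE {..<n} (\<lambda>_. PiE (UNIV::'d set) (\<lambda>_. R))"
  define Iof where "Iof \<sigma> = (\<Union>j<n. range (\<sigma> j :: 'd \<Rightarrow> nat \<times> nat))" for \<sigma> :: "nat \<Rightarrow> 'd \<Rightarrow> nat \<times> nat"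
  define W where "W \<sigma> g l = (if l \<in> R then (\<Union>j<n. (\<lambda>x. vof g a (\<sigma> j) + x) ` cbox a b) else UNIV)"
    for \<sigma> :: "nat \<Rightarrow> 'd \<Rightarrow> nat \<times> nat" and g :: "nat \<times> nat \<Rightarrow> real^'d" and l
  define A where "A \<sigma> = {F \<in> K \<rightarrow>\<^sub>E S. restrict F (Iof \<sigma>) \<in> (Iof \<sigma> \<rightarrow>\<^sub>E S) \<and>
      (\<forall>l\<in>K - Iof \<sigma>. F l \<in> W \<sigma> (restrict F (Iof \<sigma>)) l)}" for \<sigma>
  define c where "c l = (if l \<in> R then (1 - \<epsilon>) * real m else real m)" for l :: "nat \<times> nat"
  have fK: "finite K" by (simp add: K_def)
  have RK: "R \<subseteq> K" using ih by (auto simp: R_def K_def)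
  have cardR: "card R = k" by (simp add: R_def card_cartesian_product)
  have cardK: "card K = h * k" by (simp add: K_def card_cartesian_product)
  have fR: "finite R" by (simp add: R_def)
  have Rne: "R \<noteq> {}" using k1 unfolding R_def by (simp add: lessThan_empty_iff)
  have fSig: "finite Sig" unfolding Sig_def using fR by (intro finite_PiE) auto
  have cardSig: "card Sig = (k ^ D) ^ n"
    unfolding Sig_def D_def using fR by (simp add: card_PiE cardR)
  have sub: "{F \<in> K \<rightarrow>\<^sub>E S. coverable n (cbox a b) (F ` R)} \<subseteq> (\<Union>\<sigma>\<in>Sig. A \<sigma>)"
  proof
    fix F assume F: "F \<in> {F \<in> K \<rightarrow>\<^sub>E S. coverable n (cbox a b) (F ` R)}"
    then obtain V where V: "finite V" "card V \<le> n" "F ` R \<subseteq> (\<Union>v\<in>V. (\<lambda>x. v + x) ` cbox a b)"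
      unfolding coverable_def by blast
    obtain \<sigma>0 where s0: "\<forall>j e. \<sigma>0 j e \<in> R" "\<forall>l\<in>R. \<exists>j<n. F l - vof F a (\<sigma>0 j) \<in> cbox a b"
      using normalize[OF fR Rne V] by blast
    define \<sigma> where "\<sigma> = restrict \<sigma>0 {..<n}"
    have sS: "\<sigma> \<in> Sig" using s0(1) by (auto simp: \<sigma>_def Sig_def)
    have IR: "Iof \<sigma> \<subseteq> R" using s0(1) by (auto simp: Iof_def \<sigma>_def)
    have vof_eq: "vof (restrict F (Iof \<sigma>)) a (\<sigma> j) = vof F a (\<sigma>0 j)" if "j < n" for j
      using that unfolding vof_def Iof_def \<sigma>_def by (intro arg_cong[where f=vec_lambda] ext) auto
    have "F \<in> A \<sigma>"
      unfolding A_def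
    proof (intro CollectI conjI ballI)
      show "F \<in> K \<rightarrow>\<^sub>E S" using F by blast
      show "restrict F (Iof \<sigma>) \<in> Iof \<sigma> \<rightarrow>\<^sub>E S" using F IR RK by (auto simp: PiE_def Pi_def)
      fix l assume l: "l \<in> K - Iof \<sigma>"
      show "F l \<in> W \<sigma> (restrict F (Iof \<sigma>)) l"
      proof (cases "l \<in> R")
        case True
        then obtain j where j: "j < n" "F l - vof F a (\<sigma>0 j) \<in> cbox a b" using s0(2) by blast
        have "F l = vof (restrict F (Iof \<sigma>)) a (\<sigma> j) + (F l - vof F a (\<sigma>0 j))"
          using vof_eq[OF j(1)] by simp
        then have "F l \<in> (\<lambda>x. vof (restrict F (Iof \<sigma>)) a (\<sigma> j) + x) ` cbox a b"
          using j(2) by blast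
        then show ?thesis using True j(1) by (auto simp: W_def)
      next
        case False then show ?thesis by (simp add: W_def)
      qed
    qed
    then show "F \<in> (\<Union>\<sigma>\<in>Sig. A \<sigma>)" using sS by blast
  qed
  have bnd: "real (card (A \<sigma>)) \<le> (1 - \<epsilon>) ^ (k - n * D) * real m ^ (h * k)" if sS: "\<sigma> \<in> Sig" for \<sigma>
  proof -
    let ?I = "Iof \<sigma>"
    have IR: "?I \<subseteq> R" using sS by (auto simp: Iof_def Sig_def PiE_def Pi_def)
    have fI: "finite ?I" using IR fR finite_subset by blast
    have cI: "card ?I \<le> n * D"
    proof -
      have "card ?I \<le> (\<Sum>j<n. card (range (\<sigma> j)))" unfolding Iof_def by (rule card_UN_le) simp
      also have "\<dots> \<le> (\<Sum>j<n. D)" unfolding D_def by (intro sum_mono card_image_le) simp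
      finally show ?thesis by simp
    qed
    have Wc: "real (card (S \<inter> W \<sigma> g l)) \<le> c l" if g: "g \<in> ?I \<rightarrow>\<^sub>E S" and l: "l \<in> K - ?I" for g l
    proof (cases "l \<in> R")
      case True
      define V where "V = (\<lambda>j. vof g a (\<sigma> j)) ` {..<n}"
      have V: "finite V" "card V \<le> n" unfolding V_def using card_image_le[of "{..<n}"] by auto
      have WU: "W \<sigma> g l = (\<Union>v\<in>V. (\<lambda>x. v + x) ` cbox a b)" using True by (simp add: W_def V_def)
      have "real (card (S - W \<sigma> g l)) \<ge> \<epsilon> * real m" using Hyp V WU by (simp add: m_def)
      moreover have "card S = card (S \<inter> W \<sigma> g l) + card (S - W \<sigma> g l)" using fS by (rule card_Int_Diff)
      ultimately show ?thesis using True by (simp add: c_def m_def algebra_simps)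
    next
      case False
      then show ?thesis by (simp add: c_def W_def m_def)
    qed
    have "real (card (A \<sigma>)) \<le> real (card (?I \<rightarrow>\<^sub>E S)) * (\<Prod>l\<in>K - ?I. c l)"
      unfolding A_def
      by (rule split_count[OF fK _ fS]) (use IR RK Wc in auto)
    also have "\<dots> = real m ^ card ?I * (((1 - \<epsilon>) * real m) ^ card (R - ?I) * real m ^ card (K - R))"
      using fI by (simp add: card_PiE m_def c_def prod_split_row[OF fK IR RK])
    also have "\<dots> = (1 - \<epsilon>) ^ card (R - ?I) * real m ^ (card ?I + card (R - ?I) + card (K - R))"
      by (simp add: power_add power_mult_distrib)
    also have "card ?I + card (R - ?I) + card (K - R) = h * k"
    proof -
      have "card (R - ?I) = k - card ?I" using card_Diff_subset[OF fI IR] cardR by simp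
      moreover have "card ?I \<le> k" using card_mono[OF fR IR] cardR by simp
      moreover have "card (K - R) = h * k - k" using card_Diff_subset[OF fR RK] cardR cardK by simp
      moreover have "k \<le> h * k" using ih by simp
      ultimately show ?thesis by simp
    qed
    also have "(1 - \<epsilon>) ^ card (R - ?I) \<le> (1 - \<epsilon>) ^ (k - n * D)"
    proof (rule power_decreasing)
      have "card (R - ?I) = k - card ?I" using card_Diff_subset[OF fI IR] cardR by simp
      then show "k - n * D \<le> card (R - ?I)" using cI by simp
    qed (use eps in auto)
    then have "(1 - \<epsilon>) ^ card (R - ?I) * real m ^ (h * k) \<le> (1 - \<epsilon>) ^ (k - n * D) * real m ^ (h * k)"
      by (intro mult_right_mono) auto
    finally show ?thesis .
  qed
  have fin: "finite (\<Union>\<sigma>\<in>Sig. A \<sigma>)"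
  proof -
    have "(\<Union>\<sigma>\<in>Sig. A \<sigma>) \<subseteq> K \<rightarrow>\<^sub>E S" by (auto simp: A_def)
    then show ?thesis using finite_PiE[OF fK, of "\<lambda>_. S"] fS finite_subset by blast
  qed
  have "card {F \<in> K \<rightarrow>\<^sub>E S. coverable n (cbox a b) (F ` R)} \<le> card (\<Union>\<sigma>\<in>Sig. A \<sigma>)"
    by (rule card_mono[OF fin sub])
  also have "\<dots> \<le> (\<Sum>\<sigma>\<in>Sig. card (A \<sigma>))" by (rule card_UN_le[OF fSig])
  finally have "real (card {F \<in> K \<rightarrow>\<^sub>E S. coverable n (cbox a b) (F ` R)}) \<le> real (\<Sum>\<sigma>\<in>Sig. card (A \<sigma>))"
    by (simp only: of_nat_le_iff)
  also have "\<dots> = (\<Sum>\<sigma>\<in>Sig. real (card (A \<sigma>)))" by (simp only: of_nat_sum)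
  also have "\<dots> \<le> (\<Sum>\<sigma>\<in>Sig. (1 - \<epsilon>) ^ (k - n * D) * real m ^ (h * k))"
    by (intro sum_mono bnd)
  also have "\<dots> = real (card Sig) * ((1 - \<epsilon>) ^ (k - n * D) * real m ^ (h * k))" by simp
  finally show ?thesis by (simp add: cardSig K_def R_def D_def m_def)
qed

lemma pair_eq_bound:
  fixes S :: "'a set" and I :: "'i set"
  assumes fS: "finite S" and fI: "finite I" and x: "x \<in> I" and y: "y \<in> I" and xy: "x \<noteq> y"
  shows "card {g \<in> I \<rightarrow>\<^sub>E S. g x = g y} \<le> card S ^ (card I - 1)"
proof -
  let ?X = "{g \<in> I \<rightarrow>\<^sub>E S. g x = g y}"
  let ?r = "\<lambda>g. restrict g (I - {y})"
  have inj: "inj_on ?r ?X"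
  proof (rule inj_onI)
    fix g g' assume g: "g \<in> ?X" and g': "g' \<in> ?X" and e: "?r g = ?r g'"
    show "g = g'"
    proof
      fix z
      show "g z = g' z"
      proof (cases "z \<in> I - {y}")
        case True then show ?thesis using e by (metis restrict_apply')
      next
        case False
        show ?thesis
        proof (cases "z = y")
          case True
          have "g x = g' x" using e x xy by (metis Diff_iff restrict_apply' singletonD)
          then show ?thesis using g g' True by simp
        next
          case False
          then have "z \<notin> I" using \<open>z \<notin> I - {y}\<close> by blast
          then show ?thesis using g g' by (auto simp: PiE_def extensional_def)
        qed
      qed
    qed
  qed
  have sub: "?r ` ?X \<subseteq> (I - {y}) \<rightarrow>\<^sub>E S" by (auto simp: PiE_def Pi_def)
  have "card ?X = card (?r ` ?X)" using card_image[OF inj] by simp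
  also have "\<dots> \<le> card ((I - {y}) \<rightarrow>\<^sub>E S)"
    by (rule card_mono[OF _ sub]) (use fI fS in \<open>simp add: finite_PiE\<close>)
  also have "\<dots> = card S ^ (card I - 1)" using fI y by (simp add: card_funcsetE)
  finally show ?thesis .
qed

lemma gj_bound:
  fixes S :: "(real^'d::finite) set" and I :: "'i set"
  assumes fS: "finite S" and fI: "finite I" and cI: "card I = h"
  shows "real (card {g \<in> I \<rightarrow>\<^sub>E S. \<not> coverable n B (g ` I)})
     \<le> real h ^ h * real (card {T. T \<subseteq> S \<and> card T = h \<and> \<not> coverable n B T})
       + real h ^ 2 * real (card S) ^ (h - 1)"
proof -
  define Bad where "Bad = {T. T \<subseteq> S \<and> card T = h \<and> \<not> coverable n B T}"
  define P where "P = {p \<in> I \<times> I. fst p \<noteq> snd p}"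
  define X1 where "X1 = (\<Union>T\<in>Bad. I \<rightarrow>\<^sub>E T)"
  define X2 where "X2 = (\<Union>p\<in>P. {g \<in> I \<rightarrow>\<^sub>E S. g (fst p) = g (snd p)})"
  have fBad: "finite Bad" unfolding Bad_def using fS by (rule rev_finite_subset[OF finite_Pow_iff[THEN iffD2]]) auto
  have fP: "finite P" unfolding P_def using fI by simp
  have sub: "{g \<in> I \<rightarrow>\<^sub>E S. \<not> coverable n B (g ` I)} \<subseteq> X1 \<union> X2"
  proof
    fix g assume g: "g \<in> {g \<in> I \<rightarrow>\<^sub>E S. \<not> coverable n B (g ` I)}"
    show "g \<in> X1 \<union> X2"
    proof (cases "inj_on g I")
      case True
      then have "g ` I \<in> Bad" using g cI card_image[OF True] by (auto simp: Bad_def PiE_def Pi_def)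
      moreover have "g \<in> I \<rightarrow>\<^sub>E g ` I" using g by (auto simp: PiE_def Pi_def)
      ultimately show ?thesis by (auto simp: X1_def)
    next
      case False
      then obtain x y where "x \<in> I" "y \<in> I" "x \<noteq> y" "g x = g y" unfolding inj_on_def by blast
      then show ?thesis using g unfolding X2_def P_def by force
    qed
  qed
  have fX: "finite (X1 \<union> X2)"
  proof -
    have "X1 \<union> X2 \<subseteq> I \<rightarrow>\<^sub>E S" by (auto simp: X1_def X2_def Bad_def PiE_def Pi_def)
    then show ?thesis using finite_PiE[OF fI, of "\<lambda>_. S"] fS finite_subset by blast
  qed
  have c1: "card X1 \<le> card Bad * h ^ h"
  proof -
    have "card X1 \<le> (\<Sum>T\<in>Bad. card (I \<rightarrow>\<^sub>E T))" unfolding X1_def by (rule card_UN_le[OF fBad])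
    also have "\<dots> = (\<Sum>T\<in>Bad. h ^ h)"
      using fI cI by (intro sum.cong refl) (simp add: card_funcsetE Bad_def)
    finally show ?thesis by simp
  qed
  have c2: "card X2 \<le> h ^ 2 * card S ^ (h - 1)"
  proof -
    have "card X2 \<le> (\<Sum>p\<in>P. card {g \<in> I \<rightarrow>\<^sub>E S. g (fst p) = g (snd p)})"
      unfolding X2_def by (rule card_UN_le[OF fP])
    also have "\<dots> \<le> (\<Sum>p\<in>P. card S ^ (h - 1))"
      using cI pair_eq_bound[OF fS fI] by (intro sum_mono) (auto simp: P_def)
    also have "\<dots> = card P * card S ^ (h - 1)" by simp
    also have "card P \<le> h ^ 2"
    proof -
      have "card P \<le> card (I \<times> I)" unfolding P_def using fI by (intro card_mono) auto
      then show ?thesis using cI by (simp add: card_cartesian_product power2_eq_square)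
    qed
    then have "card P * card S ^ (h - 1) \<le> h ^ 2 * card S ^ (h - 1)" by simp
    finally show ?thesis .
  qed
  have "card {g \<in> I \<rightarrow>\<^sub>E S. \<not> coverable n B (g ` I)} \<le> card (X1 \<union> X2)" by (rule card_mono[OF fX sub])
  also have "\<dots> \<le> card X1 + card X2" by (rule card_Un_le)
  finally have "card {g \<in> I \<rightarrow>\<^sub>E S. \<not> coverable n B (g ` I)} \<le> h ^ h * card Bad + h ^ 2 * card S ^ (h - 1)"
    using c1 c2 by (simp add: mult.commute)
  then have "real (card {g \<in> I \<rightarrow>\<^sub>E S. \<not> coverable n B (g ` I)}) \<le> real (h ^ h * card Bad + h ^ 2 * card S ^ (h - 1))"
    by (simp only: of_nat_le_iff)
  then show ?thesis by (simp add: Bad_def)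
qed

lemma main_count:
  fixes S :: "(real^'d::finite) set" and a b :: "real^'d" and \<epsilon> :: real
  assumes hp: "hc_prop TYPE('d) n h" and h1: "1 \<le> h" and Bb: "is_box (cbox a b)"
    and fS: "finite S" and m0: "0 < card S" and eps: "0 < \<epsilon>" "\<epsilon> \<le> 1" and k1: "1 \<le> k"
    and Hyp: "\<forall>V. finite V \<and> card V \<le> n \<longrightarrow>
               real (card (S - (\<Union>v\<in>V. (\<lambda>x. v + x) ` cbox a b))) \<ge> \<epsilon> * real (card S)"
    and small: "real h * ((real k ^ CARD('d)) ^ n * (1 - \<epsilon>) ^ (k - n * CARD('d))) \<le> 1/2"
  shows "real (card S) ^ h / 2 \<le> real k ^ h *
     (real h ^ h * real (card {T. T \<subseteq> S \<and> card T = h \<and> \<not> coverable n (cbox a b) T})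
       + real h ^ 2 * real (card S) ^ (h - 1))"
proof -
  define m where "m = card S"
  define N where "N = card {T. T \<subseteq> S \<and> card T = h \<and> \<not> coverable n (cbox a b) T}"
  define K where "K = {..<h} \<times> {..<k}"
  define row where "row i = {i} \<times> {..<k}" for i :: nat
  define X where "X = (real k ^ CARD('d)) ^ n * (1 - \<epsilon>) ^ (k - n * CARD('d))"
  define Good where "Good = {F \<in> K \<rightarrow>\<^sub>E S. \<forall>i<h. \<not> coverable n (cbox a b) (F ` row i)}"
  define Bad where "Bad i = {F \<in> K \<rightarrow>\<^sub>E S. coverable n (cbox a b) (F ` row i)}" for i
  define J where "J = {..<h} \<rightarrow>\<^sub>E {..<k}"
  define Ij where "Ij j = (\<lambda>i. (i, j i)) ` {..<h}" for j :: "nat \<Rightarrow> nat"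
  define Gj where "Gj j = {g \<in> Ij j \<rightarrow>\<^sub>E S. \<not> coverable n (cbox a b) (g ` Ij j)}" for j
  define Aj where "Aj j = {F \<in> K \<rightarrow>\<^sub>E S. restrict F (Ij j) \<in> Gj j \<and> (\<forall>l\<in>K - Ij j. F l \<in> (\<lambda>_ _. UNIV) (restrict F (Ij j)) l)}" for j
  have fK: "finite K" by (simp add: K_def)
  have cardK: "card K = h * k" by (simp add: K_def card_cartesian_product)
  have fPi: "finite (K \<rightarrow>\<^sub>E S)" using fK fS by (simp add: finite_PiE)
  have cPi: "card (K \<rightarrow>\<^sub>E S) = m ^ (h * k)" using fK by (simp add: card_funcsetE cardK m_def)
  have bad_b: "real (card (Bad i)) \<le> X * real m ^ (h * k)" if "i < h" for i
    using row_bad[OF fS eps k1 that Hyp] by (simp add: Bad_def K_def row_def X_def m_def mult.assoc)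
  have split: "K \<rightarrow>\<^sub>E S \<subseteq> Good \<union> (\<Union>i<h. Bad i)" by (auto simp: Good_def Bad_def)
  have "m ^ (h * k) \<le> card (Good \<union> (\<Union>i<h. Bad i))"
    unfolding cPi[symmetric]
    by (rule card_mono[OF _ split]) (use fPi in \<open>auto simp: Good_def Bad_def intro: finite_subset\<close>)
  also have "\<dots> \<le> card Good + card (\<Union>i<h. Bad i)" by (rule card_Un_le)
  also have "card (\<Union>i<h. Bad i) \<le> (\<Sum>i<h. card (Bad i))" by (rule card_UN_le) simp
  finally have "m ^ (h * k) \<le> card Good + (\<Sum>i<h. card (Bad i))" by simp
  then have "real (m ^ (h * k)) \<le> real (card Good + (\<Sum>i<h. card (Bad i)))" by (simp only: of_nat_le_iff)
  then have "real m ^ (h * k) \<le> real (card Good) + real (\<Sum>i<h. card (Bad i))" by simp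
  also have "real (\<Sum>i<h. card (Bad i)) = (\<Sum>i<h. real (card (Bad i)))" by simp
  also have "\<dots> \<le> (\<Sum>i<h. X * real m ^ (h * k))" by (intro sum_mono bad_b) simp
  also have "\<dots> = real h * X * real m ^ (h * k)" by simp
  also have "\<dots> \<le> 1/2 * real m ^ (h * k)" using small unfolding X_def by (intro mult_right_mono) auto
  finally have good_lb: "real m ^ (h * k) / 2 \<le> real (card Good)" by simp
  have good_sub: "Good \<subseteq> (\<Union>j\<in>J. Aj j)"
  proof
    fix F assume F: "F \<in> Good"
    have nc: "\<And>i. i < h \<Longrightarrow> \<not> coverable n (cbox a b) (F ` row i)" using F by (auto simp: Good_def)
    from helly_choice[OF hp Bb, of "\<lambda>i. F ` row i", OF nc]
    obtain q where q: "\<forall>i<h. q i \<in> F ` row i" "\<not> coverable n (cbox a b) (q ` {..<h})" by blast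
    have "\<forall>i. \<exists>j. i < h \<longrightarrow> j < k \<and> q i = F (i, j)" using q(1) by (auto simp: row_def)
    then obtain j0 where j0: "\<And>i. i < h \<Longrightarrow> j0 i < k \<and> q i = F (i, j0 i)" by metis
    define j where "j = restrict j0 {..<h}"
    have jJ: "j \<in> J" using j0 by (auto simp: j_def J_def)
    have IK: "Ij j \<subseteq> K" using j0 by (auto simp: Ij_def K_def j_def)
    have img: "restrict F (Ij j) ` Ij j = q ` {..<h}"
      using j0 by (force simp: Ij_def j_def image_iff)
    have "restrict F (Ij j) \<in> Gj j"
      using F IK img q(2) by (auto simp: Gj_def Good_def PiE_def Pi_def)
    then have "F \<in> Aj j" using F by (auto simp: Aj_def Good_def)
    then show "F \<in> (\<Union>j\<in>J. Aj j)" using jJ by blast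
  qed
  have fJ: "finite J" by (simp add: J_def finite_PiE)
  have cJ: "card J = k ^ h" by (simp add: J_def card_funcsetE)
  have aj_b: "real (card (Aj j)) \<le> (real h ^ h * real N + real h ^ 2 * real m ^ (h - 1)) * real m ^ (h * k - h)"
    if jJ: "j \<in> J" for j
  proof -
    have IK: "Ij j \<subseteq> K" using jJ by (auto simp: Ij_def K_def J_def)
    have fI: "finite (Ij j)" by (simp add: Ij_def)
    have cI: "card (Ij j) = h" unfolding Ij_def by (subst card_image) (auto simp: inj_on_def)
    have "real (card (Aj j)) \<le> real (card (Gj j)) * (\<Prod>l\<in>K - Ij j. real m)"
      unfolding Aj_def by (rule split_count[OF fK IK fS]) (auto simp: Gj_def m_def)
    also have "(\<Prod>l\<in>K - Ij j. real m) = real m ^ (h * k - h)"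
      using card_Diff_subset[OF fI IK] cardK cI by simp
    also have "real (card (Gj j)) \<le> real h ^ h * real N + real h ^ 2 * real m ^ (h - 1)"
      unfolding Gj_def N_def m_def by (rule gj_bound[OF fS fI cI])
    then have "real (card (Gj j)) * real m ^ (h * k - h) \<le> (real h ^ h * real N + real h ^ 2 * real m ^ (h - 1)) * real m ^ (h * k - h)"
      by (intro mult_right_mono) auto
    finally show ?thesis .
  qed
  have fU: "finite (\<Union>j\<in>J. Aj j)"
  proof -
    have "(\<Union>j\<in>J. Aj j) \<subseteq> K \<rightarrow>\<^sub>E S" by (auto simp: Aj_def)
    then show ?thesis using fPi finite_subset by blast
  qed
  have "card Good \<le> card (\<Union>j\<in>J. Aj j)" by (rule card_mono[OF fU good_sub])
  also have "\<dots> \<le> (\<Sum>j\<in>J. card (Aj j))" by (rule card_UN_le[OF fJ])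
  finally have "real (card Good) \<le> real (\<Sum>j\<in>J. card (Aj j))" by (simp only: of_nat_le_iff)
  also have "\<dots> = (\<Sum>j\<in>J. real (card (Aj j)))" by (simp only: of_nat_sum)
  also have "\<dots> \<le> (\<Sum>j\<in>J. (real h ^ h * real N + real h ^ 2 * real m ^ (h - 1)) * real m ^ (h * k - h))"
    by (intro sum_mono aj_b)
  also have "\<dots> = real k ^ h * (real h ^ h * real N + real h ^ 2 * real m ^ (h - 1)) * real m ^ (h * k - h)"
    by (simp add: cJ)
  finally have "real m ^ (h * k) / 2 \<le> real k ^ h * (real h ^ h * real N + real h ^ 2 * real m ^ (h - 1)) * real m ^ (h * k - h)"
    using good_lb by linarith
  moreover have "real m ^ (h * k) = real m ^ h * real m ^ (h * k - h)"
  proof -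
    have "h * k = h + (h * k - h)" using k1 by (simp add: le_add_diff_inverse) 
    then show ?thesis by (metis power_add)
  qed
  moreover have "0 < real m ^ (h * k - h)" using m0 by (simp add: m_def)
  ultimately have "real m ^ h / 2 * real m ^ (h * k - h) \<le> real k ^ h * (real h ^ h * real N + real h ^ 2 * real m ^ (h - 1)) * real m ^ (h * k - h)"
    by simp
  then have "real m ^ h / 2 \<le> real k ^ h * (real h ^ h * real N + real h ^ 2 * real m ^ (h - 1))"
    using \<open>0 < real m ^ (h * k - h)\<close> by (rule mult_right_le_imp_le)
  then show ?thesis by (simp add: m_def N_def)
qed

lemma exists_bad:
  fixes S :: "(real^'d::finite) set" and B :: "(real^'d) set"
  assumes hp: "hc_prop TYPE('d) n h" and B: "is_box B" and fS: "finite S" and hS: "h \<le> card S"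
    and h1: "1 \<le> h" and eps: "0 < \<epsilon>"
    and Hyp: "\<forall>V. finite V \<and> card V \<le> n \<longrightarrow>
               real (card (S - (\<Union>v\<in>V. (\<lambda>x. v + x) ` B))) \<ge> \<epsilon> * real (card S)"
  shows "1 \<le> card {T. T \<subseteq> S \<and> card T = h \<and> \<not> coverable n B T}"
proof -
  have ncS: "\<not> coverable n B S"
  proof
    assume "coverable n B S"
    then obtain V where V: "finite V" "card V \<le> n" "S \<subseteq> (\<Union>v\<in>V. (\<lambda>x. v + x) ` B)"
      unfolding coverable_def by blast
    then have e: "S - (\<Union>v\<in>V. (\<lambda>x. v + x) ` B) = {}" by blast
    have "real (card (S - (\<Union>v\<in>V. (\<lambda>x. v + x) ` B))) \<ge> \<epsilon> * real (card S)"
      using Hyp V(1,2) by blast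
    then have "\<epsilon> * real (card S) \<le> 0" unfolding e by simp
    moreover have "\<epsilon> * real (card S) > 0" using eps hS h1 by simp
    ultimately show False by linarith
  qed
  obtain q where q: "\<forall>i<h. q i \<in> S" "\<not> coverable n B (q ` {..<h})"
    using helly_choice[OF hp B, of "\<lambda>_. S"] ncS by blast
  have QS: "q ` {..<h} \<subseteq> S" using q(1) by blast
  have "card (q ` {..<h}) \<le> h" using card_image_le[of "{..<h}" q] by simp
  then obtain T where T: "q ` {..<h} \<subseteq> T" "T \<subseteq> S" "card T = h"
    using exists_subset_between[OF _ hS QS fS] by blast
  have "\<not> coverable n B T" using q(2) T(1) coverable_mono by blast
  then have "T \<in> {T. T \<subseteq> S \<and> card T = h \<and> \<not> coverable n B T}" using T by blast
  moreover have "finite {T. T \<subseteq> S \<and> card T = h \<and> \<not> coverable n B T}"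
    using fS by (rule rev_finite_subset[OF finite_Pow_iff[THEN iffD2]]) auto
  ultimately show ?thesis by (metis One_nat_def Suc_leI card_gt_0_iff empty_iff)
qed

lemma choose_k:
  fixes \<epsilon> :: real and h p :: nat
  assumes eps: "0 < \<epsilon>" "\<epsilon> \<le> 1" and h1: "1 \<le> h"
  shows "\<exists>k. 1 \<le> k \<and> real h * (real k ^ p * (1 - \<epsilon>) ^ (k - p)) \<le> 1/2"
proof -
  define q where "q = 1 - \<epsilon> / 2"
  have q: "0 < q" "q < 1" "1 - \<epsilon> \<le> q" using eps by (auto simp: q_def)
  have qp: "0 < q ^ p" using q by simp
  have "(\<lambda>k. real k ^ p * q ^ k) \<longlonglongrightarrow> 0" by (rule poly_exp_lim[OF q(1,2)])
  moreover have "0 < q ^ p / (2 * real h)" using qp h1 by simp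
  ultimately have "\<forall>\<^sub>F k in sequentially. real k ^ p * q ^ k < q ^ p / (2 * real h)"
    by (rule order_tendstoD(2))
  then obtain N where N: "\<And>k. N \<le> k \<Longrightarrow> real k ^ p * q ^ k < q ^ p / (2 * real h)"
    unfolding eventually_sequentially by blast
  define k where "k = max N (max p 1)"
  have k: "N \<le> k" "p \<le> k" "1 \<le> k" by (auto simp: k_def)
  have qk: "q ^ k = q ^ (k - p) * q ^ p" using k(2) by (metis le_add_diff_inverse2 power_add)
  have "(1 - \<epsilon>) ^ (k - p) \<le> q ^ (k - p)" using q eps by (intro power_mono) auto
  then have "real h * (real k ^ p * (1 - \<epsilon>) ^ (k - p)) \<le> real h * (real k ^ p * q ^ (k - p))"
    by (intro mult_left_mono) auto
  also have "real k ^ p * q ^ (k - p) = real k ^ p * q ^ k / q ^ p"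
    by (unfold qk) (use q(1) in \<open>simp add: field_simps\<close>)
  also have "real h * (real k ^ p * q ^ k / q ^ p) \<le> real h * ((q ^ p / (2 * real h)) / q ^ p)"
    using N[OF k(1)] qp by (intro mult_left_mono divide_right_mono) auto
  also have "\<dots> = 1/2" using q(1) h1 by simp
  finally show ?thesis using k(3) by blast
qed

theorem lemma6:
  fixes n :: nat
  assumes "hc_finite TYPE('d::finite) n"
  shows "\<forall>\<epsilon>::real. 0 < \<epsilon> \<and> \<epsilon> \<le> 1 \<longrightarrow>
     (\<exists>\<gamma>::real. \<gamma> > 0 \<and>
        (\<forall>(B :: (real^'d) set) (S :: (real^'d) set).
           is_box B \<longrightarrow> finite S \<longrightarrow> card S \<ge> hc TYPE('d) n \<longrightarrow>
           (\<forall>V. finite V \<and> card V \<le> n \<longrightarrow>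
               real (card (S - (\<Union>v\<in>V. (\<lambda>x. v + x) ` B))) \<ge> \<epsilon> * real (card S)) \<longrightarrow>
           real (card {T. T \<subseteq> S \<and> card T = hc TYPE('d) n \<and> \<not> coverable n B T})
             \<ge> \<gamma> * real (card S choose hc TYPE('d) n)))"
proof (intro allI impI)
  fix \<epsilon> :: real assume "0 < \<epsilon> \<and> \<epsilon> \<le> 1"
  then have eps: "0 < \<epsilon>" "\<epsilon> \<le> 1" by auto
  define h where "h = hc TYPE('d) n"
  have hh: "0 < h \<and> hc_prop TYPE('d) n h"
    using assms unfolding hc_finite_def h_def hc_def by (rule LeastI_ex)
  then have h1: "1 \<le> h" and hp: "hc_prop TYPE('d) n h" by auto
  define D where "D = CARD('d)"
  obtain k where k: "1 \<le> k" "real h * (real k ^ (n * D) * (1 - \<epsilon>) ^ (k - n * D)) \<le> 1/2"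
    using choose_k[OF eps h1] by blast
  have small: "real h * ((real k ^ CARD('d)) ^ n * (1 - \<epsilon>) ^ (k - n * CARD('d))) \<le> 1/2"
    using k(2) by (simp add: D_def power_mult[symmetric] mult.commute)
  define M0 where "M0 = 4 * real h ^ 2 * real k ^ h"
  have M0p: "0 < M0" using h1 k(1) by (simp add: M0_def)
  define \<gamma>1 where "\<gamma>1 = 1 / (4 * real k ^ h * real h ^ h)"
  define \<gamma>2 where "\<gamma>2 = 1 / M0 ^ h"
  have g1: "0 < \<gamma>1" using h1 k(1) by (simp add: \<gamma>1_def)
  have g2: "0 < \<gamma>2" using M0p by (simp add: \<gamma>2_def)
  show "\<exists>\<gamma>::real. \<gamma> > 0 \<and>
        (\<forall>(B :: (real^'d) set) (S :: (real^'d) set).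
           is_box B \<longrightarrow> finite S \<longrightarrow> card S \<ge> hc TYPE('d) n \<longrightarrow>
           (\<forall>V. finite V \<and> card V \<le> n \<longrightarrow>
               real (card (S - (\<Union>v\<in>V. (\<lambda>x. v + x) ` B))) \<ge> \<epsilon> * real (card S)) \<longrightarrow>
           real (card {T. T \<subseteq> S \<and> card T = hc TYPE('d) n \<and> \<not> coverable n B T})
             \<ge> \<gamma> * real (card S choose hc TYPE('d) n))"
  proof (intro exI[of _ "min \<gamma>1 \<gamma>2"] conjI allI impI)
    show "0 < min \<gamma>1 \<gamma>2" using g1 g2 by simp
    fix B S :: "(real^'d) set"
    assume B: "is_box B" and fS: "finite S" and hS0: "hc TYPE('d) n \<le> card S"
      and Hyp: "\<forall>V. finite V \<and> card V \<le> n \<longrightarrow>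
               real (card (S - (\<Union>v\<in>V. (\<lambda>x. v + x) ` B))) \<ge> \<epsilon> * real (card S)"
    have hS: "h \<le> card S" using hS0 by (simp add: h_def)
    define m where "m = card S"
    define N where "N = card {T. T \<subseteq> S \<and> card T = h \<and> \<not> coverable n B T}"
    have N1: "1 \<le> N" unfolding N_def by (rule exists_bad[OF hp B fS hS h1 eps(1) Hyp])
    have Cm: "real (m choose h) \<le> real m ^ h"
      using binomial_le_pow[of h m] hS by (simp add: m_def flip: of_nat_power)
    have "min \<gamma>1 \<gamma>2 * real (m choose h) \<le> real N"
    proof (cases "real m < M0")
      case True
      have "real m ^ h \<le> M0 ^ h" using True by (intro power_mono) auto
      then have "real (m choose h) \<le> M0 ^ h" using Cm by linarith
      then have "\<gamma>2 * real (m choose h) \<le> \<gamma>2 * M0 ^ h" using g2 by (intro mult_left_mono) auto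
      also have "\<dots> = 1" using M0p by (simp add: \<gamma>2_def)
      finally have "\<gamma>2 * real (m choose h) \<le> real N" using N1 by linarith
      moreover have "min \<gamma>1 \<gamma>2 * real (m choose h) \<le> \<gamma>2 * real (m choose h)"
        by (intro mult_right_mono) auto
      ultimately show ?thesis by linarith
    next
      case False
      obtain a b where ab: "\<forall>i. a$i \<le> b$i" "B = cbox a b" using B unfolding is_box_def by blast
      have m0: "0 < card S" using hS h1 by simp
      have mc: "real m ^ h / 2 \<le> real k ^ h * (real h ^ h * real N + real h ^ 2 * real m ^ (h - 1))"
        using main_count[OF hp h1 B[unfolded ab(2)] fS m0 eps k(1) Hyp[unfolded ab(2)] small]
        by (simp add: m_def N_def ab(2))
      have mh: "real m ^ h = real m * real m ^ (h - 1)" using h1 by (metis power_eq_if not_one_le_zero)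
      have "M0 * real m ^ (h - 1) \<le> real m * real m ^ (h - 1)"
        using False by (intro mult_right_mono) auto
      then have "real k ^ h * (real h ^ 2 * real m ^ (h - 1)) \<le> real m ^ h / 4"
        unfolding mh M0_def by (simp add: algebra_simps)
      with mc have "real m ^ h / 4 \<le> real k ^ h * real h ^ h * real N"
        by (simp add: algebra_simps)
      then have "real (m choose h) / 4 \<le> real k ^ h * real h ^ h * real N" using Cm by linarith
      then have "\<gamma>1 * real (m choose h) \<le> real N"
        using h1 k(1) by (simp add: \<gamma>1_def field_simps)
      moreover have "min \<gamma>1 \<gamma>2 * real (m choose h) \<le> \<gamma>1 * real (m choose h)"
        by (intro mult_right_mono) auto
      ultimately show ?thesis by linarith
    qed
    then show "min \<gamma>1 \<gamma>2 * real (card S choose hc TYPE('d) n)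
        \<le> real (card {T. T \<subseteq> S \<and> card T = hc TYPE('d) n \<and> \<not> coverable n B T})"
      by (simp add: m_def N_def h_def)
  qed
qed

end
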